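(* Let $m,n$ be positive integers and $\Lambda=(a_1,\dots,a_n|b_1,\dots,b_m)\in\mathbb Z^{n|m}$ be such that $a_1,\dots,a_n$ form a complete set of representatives modulo $n$ and $b_1,\dots,b_m$ form a complete set of representatives modulo $m$. Then every element of the orbit of $\Lambda$ under the Weyl groupoid action has the same property.
   Context: Elements of $\mathbb Z^{n|m}$ are identified with $\sum_ia_i\epsilon_i-\sum_jb_j\delta_j$. The Weyl groupoid action on $\mathbb Z^{n|m}$ is generated by the permutations of $a_1,\dots,a_n$ among themselves and of $b_1,\dots,b_m$ among themselves, and, for $\alpha=\epsilon_i-\delta_j$, by the bijections $\tau_\alpha:\Pi_\alpha\to\Pi_{-\alpha}$, $\Lambda\mapsto\Lambda+n\epsilon_i-m\delta_j$ (add $n$ to $a_i$, $m$ to $b_j$) and $\tau_{-\alpha}=\tau_\alpha^{-1}$, where $\Pi_\alpha=\{a_i=b_j\}$ and $\Pi_{-\alpha}=\{a_i-b_j=n-m\}$. The orbit of $\Lambda$ is the set of elements reachable from $\Lambda$ by finite sequences of these operations, each applied on its domain. *)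

theory Defs
  imports Main
begin

text \<open>An element \<open>(a_1,...,a_n | b_1,...,b_m)\<close> of Z^{n|m} is represented by a pair
  of integer lists \<open>(a, b)\<close> with \<open>length a = n\<close>, \<open>length b = m\<close> (0-based indices).\<close>

type_synonym wt = "int list \<times> int list"

definition swap_list :: "nat \<Rightarrow> nat \<Rightarrow> 'a list \<Rightarrow> 'a list" where
  "swap_list i k xs = xs[i := xs ! k, k := xs ! i]"

inductive weyl_step :: "nat \<Rightarrow> nat \<Rightarrow> wt \<Rightarrow> wt \<Rightarrow> bool" for n m where
  perm_a: "i < n \<Longrightarrow> k < n \<Longrightarrow> weyl_step n m (a, b) (swap_list i k a, b)"
| perm_b: "j < m \<Longrightarrow> l < m \<Longrightarrow> weyl_step n m (a, b) (a, swap_list j l b)"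
| tau_pos: "i < n \<Longrightarrow> j < m \<Longrightarrow> a ! i = b ! j \<Longrightarrow>
     weyl_step n m (a, b) (a[i := a ! i + int n], b[j := b ! j + int m])"
| tau_neg: "i < n \<Longrightarrow> j < m \<Longrightarrow> a ! i - b ! j = int n - int m \<Longrightarrow>
     weyl_step n m (a, b) (a[i := a ! i - int n], b[j := b ! j - int m])"

definition weyl_orbit :: "nat \<Rightarrow> nat \<Rightarrow> wt \<Rightarrow> wt set" where
  "weyl_orbit n m \<Lambda> = {\<Lambda>'. (weyl_step n m)\<^sup>*\<^sup>* \<Lambda> \<Lambda>'}"

definition complete_residues :: "nat \<Rightarrow> int list \<Rightarrow> bool" where
  "complete_residues k xs \<longleftrightarrow> length xs = k \<and>
     bij_betw (\<lambda>i. xs ! i mod int k) {0..<k} {0..<int k}"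

end

theory Submission
  imports Defs
begin

lemma cr_upd:
  assumes "complete_residues k xs" "i < k" "y mod int k = xs ! i mod int k"
  shows "complete_residues k (xs[i := y])"
proof -
  have L: "length xs = k" and B: "bij_betw (\<lambda>p. xs ! p mod int k) {0..<k} {0..<int k}"
    using assms(1) unfolding complete_residues_def by auto
  have "bij_betw (\<lambda>p. xs[i := y] ! p mod int k) {0..<k} {0..<int k}"
  proof -
    have C: "\<And>p. p \<in> {0..<k} \<Longrightarrow> xs ! p mod int k = xs[i := y] ! p mod int k"
      using assms(2,3) L by (auto simp: nth_list_update)
    have E: "bij_betw (\<lambda>p. xs ! p mod int k) {0..<k} {0..<int k} = bij_betw (\<lambda>p. xs[i := y] ! p mod int k) {0..<k} {0..<int k}"
      by (rule bij_betw_cong) (rule C)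
    show ?thesis by (rule iffD1[OF E B])
  qed
  then show ?thesis using L unfolding complete_residues_def by simp
qed

lemma cr_swap:
  assumes "complete_residues k xs" "i < k" "j < k"
  shows "complete_residues k (swap_list i j xs)"
proof -
  have L: "length xs = k" and B: "bij_betw (\<lambda>p. xs ! p mod int k) {0..<k} {0..<int k}"
    using assms(1) unfolding complete_residues_def by auto
  define t where "t p = (if p = j then i else if p = i then j else p)" for p
  have T: "bij_betw t {0..<k} {0..<k}"
    by (rule bij_betw_byWitness[where f' = t]) (auto simp: t_def assms)
  have F1: "bij_betw ((\<lambda>p. xs ! p mod int k) \<circ> t) {0..<k} {0..<int k}"
    using T B by (rule bij_betw_trans)
  have F2: "\<And>p. p \<in> {0..<k} \<Longrightarrow> ((\<lambda>p. xs ! p mod int k) \<circ> t) p = swap_list i j xs ! p mod int k"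
    by (auto simp: t_def swap_list_def nth_list_update L assms)
  have E: "bij_betw ((\<lambda>p. xs ! p mod int k) \<circ> t) {0..<k} {0..<int k} = bij_betw (\<lambda>p. swap_list i j xs ! p mod int k) {0..<k} {0..<int k}"
    by (rule bij_betw_cong) (rule F2)
  have "bij_betw (\<lambda>p. swap_list i j xs ! p mod int k) {0..<k} {0..<int k}"
    by (rule iffD1[OF E F1])
  moreover have "length (swap_list i j xs) = k" by (simp add: swap_list_def L)
  ultimately show ?thesis unfolding complete_residues_def by (intro conjI)
qed

lemma step_pres:
  assumes "weyl_step n m x y" "complete_residues n (fst x) \<and> complete_residues m (snd x)"
  shows "complete_residues n (fst y) \<and> complete_residues m (snd y)"
  using assms
proof cases
  case (perm_a i k a b) then show ?thesis using assms(2) cr_swap[of n a i k] by simp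
next
  case (perm_b j l a b) then show ?thesis using assms(2) cr_swap[of m b j l] by simp
next
  case (tau_pos i j a b)
  have "(a ! i + int n) mod int n = a ! i mod int n" "(b ! j + int m) mod int m = b ! j mod int m"
    by simp_all
  then show ?thesis using assms(2) tau_pos cr_upd[of n a i] cr_upd[of m b j] by simp
next
  case (tau_neg i j a b)
  have "(a ! i - int n) mod int n = a ! i mod int n" "(b ! j - int m) mod int m = b ! j mod int m"
    by (simp_all add: mod_diff_right_eq[symmetric])
  then show ?thesis using assms(2) tau_neg cr_upd[of n a i] cr_upd[of m b j] by simp
qed

theorem lemma4p1:
  fixes n m :: nat and a b :: "int list"
  assumes "0 < n" and "0 < m"
    and "complete_residues n a" and "complete_residues m b"
    and "(a', b') \<in> weyl_orbit n m (a, b)"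
  shows "complete_residues n a' \<and> complete_residues m b'"
proof -
  have R: "(weyl_step n m)\<^sup>*\<^sup>* (a, b) (a', b')" using assms(5) by (simp add: weyl_orbit_def)
  have "complete_residues n (fst (a', b')) \<and> complete_residues m (snd (a', b'))"
    using R
  proof (induction rule: rtranclp_induct)
    case base then show ?case using assms(3,4) by simp
  next
    case (step y z) then show ?case using step_pres by blast
  qed
  then show ?thesis by simp
qed

end
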